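(* Let $\mathcal{Y}$ be a subset of a Euclidean space $\mathbb{R}^d$, let $\mathfrak{C}$ be a polyhedral cover of $\mathcal{Y}$, and let $\mathcal{G}=\{g_1,\ldots,g_k\}$ be a vertex interpolation function basis for $\mathfrak{C}$. Define $\boldsymbol{g}:\bigcup_{C\in\mathfrak{C}}C\to\mathbb{R}^k$ by $\boldsymbol{g}(\boldsymbol{x}):=(g_1(\boldsymbol{x}),\ldots,g_k(\boldsymbol{x}))^\top$. If $V(\mathfrak{C})\subseteq\mathcal{Y}$, then $$\operatorname{conv}(\boldsymbol{g}(\mathcal{Y}))=\Big\{(z_1,\ldots,z_k)^\top:z_1\ge0,\ldots,z_k\ge0,\ \textstyle\sum_{j=1}^kz_j\le1\Big\},$$ i.e. $\operatorname{conv}(\boldsymbol{g}(\mathcal{Y}))$ is the $k$-simplex with vertices $\boldsymbol{0},\boldsymbol{e}_1,\ldots,\boldsymbol{e}_k$, where $\boldsymbol{e}_j$ is the $j$-th standard basis vector of $\mathbb{R}^k$.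
   Context: A convex $C'\subseteq C$ is a face of a convex set $C$ if $\lambda x_1+(1-\lambda)x_2\in C'$ with $0<\lambda<1$, $x_1,x_2\in C$ implies $x_1,x_2\in C'$; $x$ is an extreme point if $\{x\}$ is a face. A polyhedron is a finite intersection of closed half-spaces. A polyhedral cover of $\mathcal{Y}\subseteq\mathbb{R}^d$ is a finite collection $\mathfrak{C}$ of polyhedra, each with at least one extreme point, with $\bigcup_{C\in\mathfrak{C}}C\supseteq\mathcal{Y}$, such that whenever $C_1,C_2\in\mathfrak{C}$ intersect, $C_1\cap C_2$ is a face of both. $V(C)$ denotes the set of extreme points of $C$, $V(\mathfrak{C}):=\bigcup_{C\in\mathfrak{C}}V(C)$, and $\mathfrak{F}(\mathfrak{C})$ the set of non-empty faces of members of $\mathfrak{C}$. A vertex interpolation function set for $\mathfrak{C}$ is a family $\{g_{\boldsymbol{v}}:\bigcup_{C\in\mathfrak{C}}C\to\mathbb{R}\}_{\boldsymbol{v}\in V(\mathfrak{C})}$ with: (VIF1) $g_{\boldsymbol{v}}\ge0$; (VIF2) $g_{\boldsymbol{v}}(\boldsymbol{v}')=\mathbf{1}_{\{\boldsymbol{v}=\boldsymbol{v}'\}}$ for all $\boldsymbol{v},\boldsymbol{v}'\in V(\mathfrak{C})$; (VIF3) $\sum_{\boldsymbol{v}\in V(F)}g_{\boldsymbol{v}}(\boldsymbol{x})=1$ for every $F\in\mathfrak{F}(\mathfrak{C})$, $\boldsymbol{x}\in F$; (VIF4) $g_{\boldsymbol{v}}(\boldsymbol{x})=0$ for every $F\in\mathfrak{F}(\mathfrak{C})$,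 $\boldsymbol{x}\in F$, $\boldsymbol{v}\in V(\mathfrak{C})\setminus V(F)$. A vertex interpolation function basis for $\mathfrak{C}$ is a set consisting of all but one of the functions of some vertex interpolation function set for $\mathfrak{C}$. *)

theory Defs
  imports "HOL-Analysis.Analysis"
begin

definition vertices :: "'a::real_vector set \<Rightarrow> 'a set" where
  "vertices C = {x. x extreme_point_of C}"

definition cover_vertices :: "'a::real_vector set set \<Rightarrow> 'a set" where
  "cover_vertices \<CC> = (\<Union>C\<in>\<CC>. vertices C)"

definition cover_faces :: "'a::real_vector set set \<Rightarrow> 'a set set" where
  "cover_faces \<CC> = {F. \<exists>C\<in>\<CC>. F face_of C \<and> F \<noteq> {}}"

definition polyhedral_cover :: "'a::euclidean_space set set \<Rightarrow> 'a set \<Rightarrow> bool" where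
  "polyhedral_cover \<CC> Y \<longleftrightarrow>
     finite \<CC> \<and>
     (\<forall>C\<in>\<CC>. polyhedron C \<and> (\<exists>x. x extreme_point_of C)) \<and>
     Y \<subseteq> \<Union>\<CC> \<and>
     (\<forall>C1\<in>\<CC>. \<forall>C2\<in>\<CC>. C1 \<inter> C2 \<noteq> {} \<longrightarrow>
        (C1 \<inter> C2) face_of C1 \<and> (C1 \<inter> C2) face_of C2)"

text \<open>Vertex interpolation function set {g v}, v in V(C); only the values
  on the union of the cover matter.\<close>
definition vif_set :: "'a::real_vector set set \<Rightarrow> ('a \<Rightarrow> 'a \<Rightarrow> real) \<Rightarrow> bool" where
  "vif_set \<CC> g \<longleftrightarrow>
     (\<forall>v\<in>cover_vertices \<CC>. \<forall>x\<in>\<Union>\<CC>. g v x \<ge> 0) \<and>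
     (\<forall>v\<in>cover_vertices \<CC>. \<forall>v'\<in>cover_vertices \<CC>. g v v' = (if v = v' then 1 else 0)) \<and>
     (\<forall>F\<in>cover_faces \<CC>. \<forall>x\<in>F. (\<Sum>v\<in>vertices F. g v x) = 1) \<and>
     (\<forall>F\<in>cover_faces \<CC>. \<forall>x\<in>F. \<forall>v\<in>cover_vertices \<CC> - vertices F. g v x = 0)"

end

theory Submission
  imports Defs
begin

lemma simplex_sub_hull:
  fixes z :: "real ^ 'k::finite"
  assumes "\<forall>j. 0 \<le> z $ j" "(\<Sum>j\<in>UNIV. z $ j) \<le> 1"
  shows "z \<in> convex hull (insert 0 (range (\<lambda>j. axis j 1)))"
proof -
  let ?e = "\<lambda>j::'k. axis j (1::real)"
  have inj: "inj ?e" unfolding inj_def by (simp add: axis_eq_axis)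
  have ne: "?e j \<noteq> 0" for j by (simp add: axis_eq_0_iff)
  have n0: "0 \<notin> range ?e"
  proof
    assume "0 \<in> range ?e"
    then obtain j where "0 = ?e j" by (rule rangeE)
    with ne[of j] show False by simp
  qed
  define u where "u x = (if x = 0 then 1 - (\<Sum>j\<in>UNIV. z $ j) else z $ (inv ?e x))" for x
  have ue: "u (?e j) = z $ j" for j
    unfolding u_def using inv_f_f[OF inj, of j] ne[of j] by simp
  have fR: "finite (range ?e)" by simp
  have u0: "u 0 = 1 - (\<Sum>j\<in>UNIV. z $ j)" by (simp add: u_def)
  have r1: "sum u (range ?e) = (\<Sum>j\<in>UNIV. z $ j)"
    using sum.reindex[OF inj, of u] ue by simp
  have s1: "sum u (insert 0 (range ?e)) = 1"
    using sum.insert[OF fR n0, of u] r1 u0 by simp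
  have r2: "(\<Sum>x\<in>range ?e. u x *\<^sub>R x) = (\<Sum>j\<in>UNIV. z $ j *\<^sub>R ?e j)"
    using sum.reindex[OF inj, of "\<lambda>x. u x *\<^sub>R x"] ue by simp
  have r3: "(\<Sum>j\<in>UNIV. z $ j *\<^sub>R ?e j) = z"
    using basis_expansion[of z] by (simp add: scalar_mult_eq_scaleR)
  have s2: "(\<Sum>x\<in>insert 0 (range ?e). u x *\<^sub>R x) = z"
    using sum.insert[OF fR n0, of "\<lambda>x. u x *\<^sub>R x"] r2 r3 by simp
  have nn: "\<forall>x\<in>insert 0 (range ?e). 0 \<le> u x"
  proof
    fix x assume "x \<in> insert 0 (range ?e)"
    then consider "x = 0" | j where "x = ?e j" by blast
    then show "0 \<le> u x"
    proof cases
      case 1 then show ?thesis using u0 assms(2) by simp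
    next
      case 2 then show ?thesis using ue assms(1) by simp
    qed
  qed
  have fS: "finite (insert 0 (range ?e))" by simp
  have "\<exists>u. (\<forall>x\<in>insert 0 (range ?e). 0 \<le> u x) \<and> sum u (insert 0 (range ?e)) = 1 \<and>
          (\<Sum>x\<in>insert 0 (range ?e). u x *\<^sub>R x) = z"
    using s1 s2 nn by (intro exI[of _ u] conjI)
  then show ?thesis
    unfolding convex_hull_finite[OF fS] by (rule CollectI)
qed

theorem proposition3p8:
  fixes Y :: "'a::euclidean_space set"
    and \<CC> :: "'a set set"
    and g :: "'a \<Rightarrow> 'a \<Rightarrow> real"
    and v0 :: 'a
    and idx :: "'k::finite \<Rightarrow> 'a"
  assumes "polyhedral_cover \<CC> Y"
    and "vif_set \<CC> g"
    and "v0 \<in> cover_vertices \<CC>"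
    and "bij_betw idx UNIV (cover_vertices \<CC> - {v0})"
    and "cover_vertices \<CC> \<subseteq> Y"
  shows "convex hull ((\<lambda>x. (\<chi> j. g (idx j) x) :: real ^ 'k) ` Y)
           = {z. (\<forall>j. 0 \<le> z $ j) \<and> (\<Sum>j\<in>UNIV. z $ j) \<le> 1}"
proof
  let ?G = "(\<lambda>x. (\<chi> j. g (idx j) x) :: real ^ 'k)"
  let ?S = "{z::real^'k. (\<forall>j. 0 \<le> z $ j) \<and> (\<Sum>j\<in>UNIV. z $ j) \<le> 1}"
  let ?V = "cover_vertices \<CC>"
  have YU: "Y \<subseteq> \<Union>\<CC>" and polyC: "\<And>C. C \<in> \<CC> \<Longrightarrow> polyhedron C"
    using assms(1) unfolding polyhedral_cover_def by simp_all
  have fin: "finite (?V - {v0})"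
    using bij_betw_finite[OF assms(4)] by simp
  hence finV: "finite ?V" by simp
  have idxV: "idx j \<in> ?V - {v0}" for j using bij_betw_apply[OF assms(4), of j] by simp
  note VV = assms(2)[unfolded vif_set_def]
  note V1 = conjunct1[OF VV]
  note V2 = conjunct1[OF conjunct2[OF VV]]
  note V3 = conjunct1[OF conjunct2[OF conjunct2[OF VV]]]
  note V4 = conjunct2[OF conjunct2[OF conjunct2[OF VV]]]
  have gnn: "\<And>v x. v \<in> ?V \<Longrightarrow> x \<in> \<Union>\<CC> \<Longrightarrow> 0 \<le> g v x"
    using V1 by blast
  have gvv: "\<And>v v'. v \<in> ?V \<Longrightarrow> v' \<in> ?V \<Longrightarrow> g v v' = (if v = v' then 1 else 0)"
    using V2 by blast
  show "convex hull (?G ` Y) \<subseteq> ?S"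
  proof (rule hull_minimal)
    show "convex ?S"
    proof (rule convexI)
      fix x y :: "real^'k" and u v :: real
      assume x: "x \<in> ?S" and y: "y \<in> ?S" and uv: "0 \<le> u" "0 \<le> v" "u + v = 1"
      have A: "\<forall>j. 0 \<le> (u *\<^sub>R x + v *\<^sub>R y) $ j"
        using x y uv by (auto intro!: add_nonneg_nonneg mult_nonneg_nonneg)
      have "(\<Sum>j\<in>UNIV. (u *\<^sub>R x + v *\<^sub>R y) $ j) = u * (\<Sum>j\<in>UNIV. x $ j) + v * (\<Sum>j\<in>UNIV. y $ j)"
        by (simp add: sum.distrib sum_distrib_left)
      also have "\<dots> \<le> u * 1 + v * 1"
        using x y uv by (intro add_mono mult_left_mono) auto
      finally have B: "(\<Sum>j\<in>UNIV. (u *\<^sub>R x + v *\<^sub>R y) $ j) \<le> 1" using uv by simp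
      show "u *\<^sub>R x + v *\<^sub>R y \<in> ?S" using A B by simp
    qed
    show "?G ` Y \<subseteq> ?S"
    proof
      fix w assume "w \<in> ?G ` Y"
      then obtain x where xY: "x \<in> Y" and w: "w = ?G x" by blast
      have xU: "x \<in> \<Union>\<CC>" using xY YU by (rule subsetD[rotated])
      then obtain C where C: "C \<in> \<CC>" "x \<in> C" by blast
      have "polyhedron C" using C(1) by (rule polyC)
      hence "C face_of C" by (simp add: face_of_refl polyhedron_imp_convex)
      hence CF: "C \<in> cover_faces \<CC>" using C unfolding cover_faces_def by blast
      have s1: "(\<Sum>v\<in>vertices C. g v x) = 1" using bspec[OF bspec[OF V3 CF] C(2)] .
      have z0: "\<forall>v\<in>?V - vertices C. g v x = 0" using bspec[OF bspec[OF V4 CF] C(2)] .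
      have sub: "vertices C \<subseteq> ?V" using C by (auto simp: cover_vertices_def)
      have "(\<Sum>v\<in>?V. g v x) = (\<Sum>v\<in>vertices C. g v x) + (\<Sum>v\<in>?V - vertices C. g v x)"
        using sum.subset_diff[OF sub finV, of "\<lambda>v. g v x"] by simp
      hence sV: "(\<Sum>v\<in>?V. g v x) = 1" using s1 z0 by simp
      have "(\<Sum>j\<in>UNIV. w $ j) = (\<Sum>v\<in>?V - {v0}. g v x)"
        using w sum.reindex_bij_betw[OF assms(4), of "\<lambda>v. g v x"] by simp
      also have "\<dots> = (\<Sum>v\<in>?V. g v x) - g v0 x"
        using finV assms(3) by (simp add: sum_diff1)
      also have "\<dots> \<le> 1" using sV gnn[OF assms(3) xU] by simp
      finally have "(\<Sum>j\<in>UNIV. w $ j) \<le> 1" .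
      moreover have "\<forall>j. 0 \<le> w $ j" using w gnn idxV xU by auto
      ultimately show "w \<in> ?S" by blast
    qed
  qed
  show "?S \<subseteq> convex hull (?G ` Y)"
  proof
    fix z assume "z \<in> ?S"
    hence "z \<in> convex hull (insert 0 (range (\<lambda>j. axis j 1)))"
      using simplex_sub_hull by blast
    moreover have "insert 0 (range (\<lambda>j. axis j 1)) \<subseteq> ?G ` Y"
    proof -
      have "g (idx j) v0 = 0" for j
        using gvv[OF _ assms(3), of "idx j"] idxV[of j] by auto
      hence "?G v0 = 0" by (simp add: vec_eq_iff)
      hence "0 \<in> ?G ` Y" using assms(3,5) by (metis image_eqI subsetD)
      moreover have "?G (idx i) = axis i 1" for i
      proof -
        have "idx j = idx i \<longleftrightarrow> j = i" for j
          using assms(4) by (auto simp: bij_betw_def inj_def)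
        hence "g (idx j) (idx i) = (if j = i then 1 else 0)" for j
          using gvv[of "idx j" "idx i"] idxV[of i] idxV[of j] by auto
        thus ?thesis by (simp add: vec_eq_iff axis_def)
      qed
      hence "axis i 1 \<in> ?G ` Y" for i using idxV assms(5) by (metis DiffD1 image_eqI subsetD)
      ultimately show ?thesis by blast
    qed
    ultimately show "z \<in> convex hull (?G ` Y)" using hull_mono by blast
  qed
qed

end
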